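(* There is a unique mass distribution $(m_1',m_2',m_3')$ (positive, with $m_1'+m_2'+m_3'=1$) such that $m_1'\hat{\mathbf b}_1+m_2'\hat{\mathbf b}_2+m_3'\hat{\mathbf b}_3=0$, namely the dual masses $m_i'=\frac12(1-m_i)$.
   Context: Masses $m_1,m_2,m_3>0$, $m_1+m_2+m_3=1$. The shape sphere (oriented m-triangles $(\mathbf a_i)$, $\sum m_i\mathbf a_i=0$, with $\sum m_i|\mathbf a_i|^2=1$, modulo rotation, with the kinematic metric, a round sphere of radius $1/2$) is magnified by factor $2$ and identified isometrically with the unit sphere $S^2(1)\subset\mathbb R^3$ so that the equator of collinear shapes is the circle $x^2+y^2=1$, $z=0$ and positively oriented shapes have $z>0$. $\hat{\mathbf b}_1,\hat{\mathbf b}_2,\hat{\mathbf b}_3$ are the unit vectors representing the binary collision shapes $\mathbf a_2=\mathbf a_3$, $\mathbf a_3=\mathbf a_1$, $\mathbf a_1=\mathbf a_2$ respectively. *)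

theory Defs
  imports "HOL-Analysis.Analysis"
begin

definition normalized_config :: "real \<Rightarrow> real \<Rightarrow> real \<Rightarrow> complex \<Rightarrow> complex \<Rightarrow> complex \<Rightarrow> bool" where
  "normalized_config m1 m2 m3 a1 a2 a3 \<longleftrightarrow>
     of_real m1 * a1 + of_real m2 * a2 + of_real m3 * a3 = 0 \<and>
     m1 * (cmod a1)\<^sup>2 + m2 * (cmod a2)\<^sup>2 + m3 * (cmod a3)\<^sup>2 = 1"

text \<open>Mass-weighted Jacobi coordinates; for a normalized configuration
  (total mass 1) one has |u|^2 + |v|^2 = 1.\<close>

definition jac_u :: "real \<Rightarrow> real \<Rightarrow> real \<Rightarrow> complex \<Rightarrow> complex \<Rightarrow> complex \<Rightarrow> complex" where
  "jac_u m1 m2 m3 a1 a2 a3 = of_real (sqrt (m1 * m2 / (m1 + m2))) * (a2 - a1)"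

definition jac_v :: "real \<Rightarrow> real \<Rightarrow> real \<Rightarrow> complex \<Rightarrow> complex \<Rightarrow> complex \<Rightarrow> complex" where
  "jac_v m1 m2 m3 a1 a2 a3 =
     of_real (sqrt ((m1 + m2) * m3 / (m1 + m2 + m3))) *
     (a3 - (of_real m1 * a1 + of_real m2 * a2) / of_real (m1 + m2))"

text \<open>Shape map onto the unit sphere S^2(1) in R^3: the Hopf map of the
  Jacobi coordinates (the shape sphere S^2(1/2) magnified by 2).  It is rotation
  invariant, sends collinear shapes to the equator z = 0 and positively
  oriented triangles to z > 0.\<close>

definition shape_point :: "real \<Rightarrow> real \<Rightarrow> real \<Rightarrow> complex \<Rightarrow> complex \<Rightarrow> complex \<Rightarrow> real^3" where
  "shape_point m1 m2 m3 a1 a2 a3 =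
     (let u = jac_u m1 m2 m3 a1 a2 a3; v = jac_v m1 m2 m3 a1 a2 a3 in
      vector [(cmod u)\<^sup>2 - (cmod v)\<^sup>2, 2 * Re (cnj u * v), 2 * Im (cnj u * v)])"

definition binary_collision :: "nat \<Rightarrow> complex \<Rightarrow> complex \<Rightarrow> complex \<Rightarrow> bool" where
  "binary_collision i a1 a2 a3 \<longleftrightarrow>
     (i = 1 \<and> a2 = a3) \<or> (i = 2 \<and> a3 = a1) \<or> (i = 3 \<and> a1 = a2)"

definition bhat :: "real \<Rightarrow> real \<Rightarrow> real \<Rightarrow> nat \<Rightarrow> real^3" where
  "bhat m1 m2 m3 i = (THE p. \<exists>a1 a2 a3. normalized_config m1 m2 m3 a1 a2 a3 \<and>
       binary_collision i a1 a2 a3 \<and> p = shape_point m1 m2 m3 a1 a2 a3)"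

end

theory Submission
  imports Defs
begin

lemma shape_scaled:
  assumes "jac_u m1 m2 m3 a1 a2 a3 = of_real cu * b" "jac_v m1 m2 m3 a1 a2 a3 = of_real cv * b"
  shows "shape_point m1 m2 m3 a1 a2 a3 = vector [(cu^2 - cv^2) * (cmod b)^2, 2*cu*cv*(cmod b)^2, 0]"
proof -
  have n: "(cmod (of_real c * b))^2 = c^2 * (cmod b)^2" for c
    by (simp add: norm_mult power_mult_distrib)
  have c: "cnj (of_real cu * b) * (of_real cv * b) = of_real (cu*cv*(cmod b)^2)"
  proof -
    have "cnj (of_real cu * b) * (of_real cv * b) = of_real (cu*cv) * (cnj b * b)" by (simp add: mult_ac)
    also have "cnj b * b = of_real ((cmod b)^2)" by (metis complex_norm_square mult.commute)
    finally show ?thesis by simp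
  qed
  show ?thesis unfolding shape_point_def Let_def assms n c
    by (simp add: algebra_simps)
qed

lemma alg1:
  fixes m1 m2 m3 A c :: real
  assumes "m1 \<noteq> 0" "A \<noteq> 0" "c \<noteq> 0"
  shows "((m1*m2/A)/m1^2 - (A*m3)/A^2) * (m1/c) = (m2 - m1*m3)/(A*c)"
  using assms by (simp add: field_simps power2_eq_square)

lemma alg2:
  fixes m1 A c S :: real
  assumes "m1 \<noteq> 0" "A \<noteq> 0" "c \<noteq> 0"
  shows "2 * (s/m1) * (t/A) * (m1/c) = 2 * (s*t)/(A*c)"
  using assms by (simp add: field_simps)

lemma case1:
  assumes p: "m1 > 0" "m2 > 0" "m3 > 0" "m1 + m2 + m3 = 1"
    and nc: "normalized_config m1 m2 m3 a1 a2 a3" and e: "a2 = a3"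
  shows "shape_point m1 m2 m3 a1 a2 a3 =
     vector [(m2 - m1*m3)/(m2 + m1*m3), 2 * sqrt(m1*m2*m3)/(m2+m1*m3), 0]"
proof -
  have com: "of_real m1 * a1 + of_real (m2+m3) * a3 = 0" and nm: "m1 * (cmod a1)\<^sup>2 + (m2+m3) * (cmod a3)\<^sup>2 = 1"
    using nc e unfolding normalized_config_def by (auto simp: algebra_simps)
  have m1: "(of_real m1::complex) \<noteq> 0" using p by simp
  have a1: "a1 = of_real (-(1-m1)/m1) * a3"
  proof -
    have "m2 + m3 = 1 - m1" using p(4) by simp
    have "of_real m1 * a1 = - (of_real (m2+m3) * a3)" using com by (simp add: eq_neg_iff_add_eq_0)
    hence "of_real m1 * a1 = - of_real (1 - m1) * a3" using \<open>m2 + m3 = 1 - m1\<close> by (simp add: algebra_simps)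
    hence "a1 = (- of_real (1 - m1) * a3) / of_real m1" using m1 by (simp add: field_simps)
    thus ?thesis by (simp add: field_simps)
  qed
  have na1: "(cmod a1)^2 = ((1-m1)/m1)^2 * (cmod a3)^2"
    unfolding a1 norm_mult norm_of_real power_mult_distrib power2_abs by (simp add: power2_eq_square algebra_simps)
  have nb: "(cmod a3)^2 = m1/(1-m1)"
  proof -
    define N where "N = (cmod a3)^2"
    have m23: "m2 + m3 = 1 - m1" using p(4) by simp
    have "m1 * (cmod a1)^2 + (1-m1) * N = 1" using nm unfolding N_def m23 .
    hence "m1 * (((1-m1)/m1)^2 * N) + (1-m1) * N = 1" unfolding na1 N_def .
    moreover have "m1 * (((1-m1)/m1)^2 * N) + (1-m1) * N = (1-m1)/m1 * N"
      using p(1) by (simp add: field_simps power2_eq_square)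
    ultimately have "(1-m1)/m1 * N = 1" by simp
    moreover have "1 - m1 > 0" using p by simp
    ultimately show ?thesis unfolding N_def[symmetric] using p(1) by (simp add: field_simps)
  qed
  define s12 where "s12 = sqrt (m1 * m2 / (m1 + m2))"
  define s3 where "s3 = sqrt ((m1 + m2) * m3 / (m1 + m2 + m3))"
  have "a3 - a1 = of_real (1 - (-(1-m1)/m1)) * a3" by (simp add: a1 algebra_simps)
  also have "1 - (-(1-m1)/m1) = 1/m1" using p(1) by (simp add: field_simps)
  finally have u: "jac_u m1 m2 m3 a1 a2 a3 = of_real (s12/m1) * a3"
    unfolding jac_u_def s12_def[symmetric] e by simp
  have "of_real m1 * a1 = of_real (-(1-m1)) * a3" unfolding a1 using p(1) by (simp add: field_simps)
  hence "(of_real m1 * a1 + of_real m2 * a3) = of_real (-(1-m1) + m2) * a3" by (simp add: algebra_simps)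
  hence "a3 - (of_real m1 * a1 + of_real m2 * a3) / of_real (m1 + m2) = of_real (1 - (-(1-m1) + m2)/(m1+m2)) * a3"
    by (simp add: algebra_simps)
  also have "1 - (-(1-m1) + m2)/(m1+m2) = 1/(m1+m2)" using p by (simp add: field_simps)
  finally have v: "jac_v m1 m2 m3 a1 a2 a3 = of_real (s3/(m1+m2)) * a3"
    unfolding jac_v_def s3_def[symmetric] e by simp
  have sq12: "s12^2 = m1 * m2 / (m1 + m2)" unfolding s12_def using p by simp
  have sq3: "s3^2 = (m1 + m2) * m3" unfolding s3_def using p by simp
  have sp: "s12 * s3 = sqrt (m1*m2*m3)" unfolding s12_def s3_def p(4) real_sqrt_mult[symmetric]
    using p by (simp add: field_simps)
  have m3: "m3 = 1 - m1 - m2" using p by simp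
  have d: "m2 + m1*m3 = (m1+m2)*(1-m1)" unfolding m3 by (simp add: algebra_simps)
  have h1: "1 - m1 \<noteq> 0" "m1 + m2 \<noteq> 0" "m1 \<noteq> 0" using p by auto
  have x: "((s12/m1)^2 - (s3/(m1+m2))^2) * (m1/(1-m1)) = (m2 - m1*m3)/((m1+m2)*(1-m1))"
    unfolding power_divide sq12 sq3 using h1 by (intro alg1) auto
  have y: "2 * (s12/m1) * (s3/(m1+m2)) * (m1/(1-m1)) = 2 * sqrt(m1*m2*m3)/((m1+m2)*(1-m1))"
    unfolding sp[symmetric] using h1 by (intro alg2) auto
  show ?thesis unfolding shape_scaled[OF u v] nb x y d by simp
qed
lemma alg1b:
  fixes m1 m2 m3 A c :: real
  assumes "m2 \<noteq> 0" "A \<noteq> 0" "c \<noteq> 0"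
  shows "((-s/m2)^2 - (t/A)^2) * (m2/c) = (s^2/m2^2 - t^2/A^2) * (m2/c)"
  using assms by (simp add: field_simps power2_eq_square)

lemma case2:
  assumes p: "m1 > 0" "m2 > 0" "m3 > 0" "m1 + m2 + m3 = 1"
    and nc: "normalized_config m1 m2 m3 a1 a2 a3" and e: "a3 = a1"
  shows "shape_point m1 m2 m3 a1 a2 a3 =
     vector [(m1 - m2*m3)/(m1 + m2*m3), - 2 * sqrt(m1*m2*m3)/(m1+m2*m3), 0]"
proof -
  have com: "of_real m2 * a2 + of_real (m1+m3) * a1 = 0" and nm: "m2 * (cmod a2)\<^sup>2 + (m1+m3) * (cmod a1)\<^sup>2 = 1"
    using nc e unfolding normalized_config_def by (auto simp: algebra_simps)
  have m2: "(of_real m2::complex) \<noteq> 0" using p by simp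
  have a2: "a2 = of_real (-(1-m2)/m2) * a1"
  proof -
    have "m1 + m3 = 1 - m2" using p(4) by simp
    have "of_real m2 * a2 = - (of_real (m1+m3) * a1)" using com by (simp add: eq_neg_iff_add_eq_0)
    hence "of_real m2 * a2 = - of_real (1 - m2) * a1" using \<open>m1 + m3 = 1 - m2\<close> by (simp add: algebra_simps)
    hence "a2 = (- of_real (1 - m2) * a1) / of_real m2" using m2 by (simp add: field_simps)
    thus ?thesis by (simp add: field_simps)
  qed
  have na2: "(cmod a2)^2 = ((1-m2)/m2)^2 * (cmod a1)^2"
    unfolding a2 norm_mult norm_of_real power_mult_distrib power2_abs by (simp add: power2_eq_square algebra_simps)
  have nb: "(cmod a1)^2 = m2/(1-m2)"
  proof -
    define N where "N = (cmod a1)^2"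
    have m23: "m1 + m3 = 1 - m2" using p(4) by simp
    have "m2 * (cmod a2)^2 + (1-m2) * N = 1" using nm unfolding N_def m23 .
    hence "m2 * (((1-m2)/m2)^2 * N) + (1-m2) * N = 1" unfolding na2 N_def .
    moreover have "m2 * (((1-m2)/m2)^2 * N) + (1-m2) * N = (1-m2)/m2 * N"
      using p(2) by (simp add: field_simps power2_eq_square)
    ultimately have "(1-m2)/m2 * N = 1" by simp
    moreover have "1 - m2 > 0" using p by simp
    ultimately show ?thesis unfolding N_def[symmetric] using p(2) by (simp add: field_simps)
  qed
  define s12 where "s12 = sqrt (m1 * m2 / (m1 + m2))"
  define s3 where "s3 = sqrt ((m1 + m2) * m3 / (m1 + m2 + m3))"
  have "a2 - a1 = of_real ((-(1-m2)/m2) - 1) * a1" by (simp add: a2 algebra_simps)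
  also have "(-(1-m2)/m2) - 1 = -1/m2" using p(2) by (simp add: field_simps)
  finally have u: "jac_u m1 m2 m3 a1 a2 a3 = of_real (-s12/m2) * a1"
    unfolding jac_u_def s12_def[symmetric] by simp
  have "of_real m2 * a2 = of_real (-(1-m2)) * a1" unfolding a2 using p(2) by (simp add: field_simps)
  hence "(of_real m1 * a1 + of_real m2 * a2) = of_real (m1 + -(1-m2)) * a1" by (simp add: algebra_simps)
  hence "a1 - (of_real m1 * a1 + of_real m2 * a2) / of_real (m1 + m2) = of_real (1 - (m1 + -(1-m2))/(m1+m2)) * a1"
    by (simp add: algebra_simps)
  also have "1 - (m1 + -(1-m2))/(m1+m2) = 1/(m1+m2)" using p by (simp add: field_simps)
  finally have v: "jac_v m1 m2 m3 a1 a2 a3 = of_real (s3/(m1+m2)) * a1"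
    unfolding jac_v_def s3_def[symmetric] e by simp
  have sq12: "s12^2 = m1 * m2 / (m1 + m2)" unfolding s12_def using p by simp
  have sq3: "s3^2 = (m1 + m2) * m3" unfolding s3_def using p by simp
  have sp: "s12 * s3 = sqrt (m1*m2*m3)" unfolding s12_def s3_def p(4) real_sqrt_mult[symmetric]
    using p by (simp add: field_simps)
  have m3: "m3 = 1 - m1 - m2" using p by simp
  have d: "m1 + m2*m3 = (m1+m2)*(1-m2)" unfolding m3 by (simp add: algebra_simps)
  have h1: "1 - m2 \<noteq> 0" "m1 + m2 \<noteq> 0" "m2 \<noteq> 0" using p by auto
  have x: "((-s12/m2)^2 - (s3/(m1+m2))^2) * (m2/(1-m2)) = (m1 - m2*m3)/((m1+m2)*(1-m2))"
  proof -
    have sq12': "s12^2 = m2 * m1 / (m1 + m2)" using sq12 by (simp add: mult.commute)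
    show ?thesis unfolding power_divide power2_minus sq12' sq3 using h1 by (intro alg1) auto
  qed
  have y: "2 * (-s12/m2) * (s3/(m1+m2)) * (m2/(1-m2)) = - 2 * sqrt(m1*m2*m3)/((m1+m2)*(1-m2))"
    unfolding sp[symmetric] using h1 alg2[of m2 "m1+m2" "1-m2" "-s12" s3] by simp
  show ?thesis unfolding shape_scaled[OF u v] nb x y d by simp
qed

lemma case3:
  assumes p: "m1 > 0" "m2 > 0" "m3 > 0" "m1 + m2 + m3 = 1"
    and nc: "normalized_config m1 m2 m3 a1 a2 a3" and e: "a1 = a2"
  shows "shape_point m1 m2 m3 a1 a2 a3 = vector [-1, 0, 0]"
proof -
  have com: "of_real m3 * a3 + of_real (m1+m2) * a1 = 0" and nm: "m3 * (cmod a3)\<^sup>2 + (m1+m2) * (cmod a1)\<^sup>2 = 1"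
    using nc e unfolding normalized_config_def by (auto simp: algebra_simps)
  have m3: "(of_real m3::complex) \<noteq> 0" using p by simp
  have a3: "a3 = of_real (-(1-m3)/m3) * a1"
  proof -
    have "m1 + m2 = 1 - m3" using p(4) by simp
    have "of_real m3 * a3 = - (of_real (m1+m2) * a1)" using com by (simp add: eq_neg_iff_add_eq_0)
    hence "of_real m3 * a3 = - of_real (1 - m3) * a1" using \<open>m1 + m2 = 1 - m3\<close> by (simp add: algebra_simps)
    hence "a3 = (- of_real (1 - m3) * a1) / of_real m3" using m3 by (simp add: field_simps)
    thus ?thesis by (simp add: field_simps)
  qed
  have na3: "(cmod a3)^2 = ((1-m3)/m3)^2 * (cmod a1)^2"
    unfolding a3 norm_mult norm_of_real power_mult_distrib power2_abs by (simp add: power2_eq_square algebra_simps)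
  have nb: "(cmod a1)^2 = m3/(1-m3)"
  proof -
    define N where "N = (cmod a1)^2"
    have m23: "m1 + m2 = 1 - m3" using p(4) by simp
    have "m3 * (cmod a3)^2 + (1-m3) * N = 1" using nm unfolding N_def m23 .
    hence "m3 * (((1-m3)/m3)^2 * N) + (1-m3) * N = 1" unfolding na3 N_def .
    moreover have "m3 * (((1-m3)/m3)^2 * N) + (1-m3) * N = (1-m3)/m3 * N"
      using p(3) by (simp add: field_simps power2_eq_square)
    ultimately have "(1-m3)/m3 * N = 1" by simp
    moreover have "1 - m3 > 0" using p by simp
    ultimately show ?thesis unfolding N_def[symmetric] using p(3) by (simp add: field_simps)
  qed
  define s3 where "s3 = sqrt ((m1 + m2) * m3 / (m1 + m2 + m3))"
  have u: "jac_u m1 m2 m3 a1 a2 a3 = of_real 0 * a1"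
    unfolding jac_u_def e by simp
  have "a3 - (of_real m1 * a1 + of_real m2 * a2) / of_real (m1 + m2) = a3 - a1"
  proof -
    have "of_real m1 * a1 + of_real m2 * a2 = of_real (m1+m2) * a1" using e by (simp add: algebra_simps)
    moreover have "(of_real (m1+m2) :: complex) \<noteq> 0" using p by (simp del: of_real_add)
    ultimately show ?thesis by simp
  qed
  also have "a3 - a1 = of_real ((-(1-m3)/m3) - 1) * a1" by (simp add: a3 algebra_simps)
  also have "(-(1-m3)/m3) - 1 = -1/m3" using p(3) by (simp add: field_simps)
  finally have v: "jac_v m1 m2 m3 a1 a2 a3 = of_real (-s3/m3) * a1"
    unfolding jac_v_def s3_def[symmetric] by simp
  have sq3: "s3^2 = (1 - m3) * m3" unfolding s3_def using p by simp
  have h1: "1 - m3 \<noteq> 0" "m3 \<noteq> 0" using p by auto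
  have x: "(0^2 - (-s3/m3)^2) * (m3/(1-m3)) = -1"
    unfolding power_divide power2_minus sq3 using h1 by (simp add: field_simps power2_eq_square)
  show ?thesis unfolding shape_scaled[OF u v] nb x by simp
qed

lemma vec3:
  "a *\<^sub>R vector [x1,y1,z1] + b *\<^sub>R vector [x2,y2,z2] + c *\<^sub>R vector [x3,y3,z3] = (0::real^3) \<longleftrightarrow>
   a*x1+b*x2+c*x3 = 0 \<and> a*y1+b*y2+c*y3 = 0 \<and> a*z1+b*z2+c*z3 = 0"
  by (simp add: vec_eq_iff forall_3 vector_3)

lemma nc_real:
  "normalized_config m1 m2 m3 (of_real x1) (of_real x2) (of_real x3) \<longleftrightarrow>
    m1*x1 + m2*x2 + m3*x3 = 0 \<and> m1*x1^2 + m2*x2^2 + m3*x3^2 = 1"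
  unfolding normalized_config_def
  by (simp flip: of_real_mult of_real_add del: of_real_mult of_real_add)

lemma alg3: fixes m c :: real assumes "m \<noteq> 0" "c \<noteq> 0"
  shows "m * (c/m)^2 * (m/c) + c * (m/c) = c + m"
  using assms by (simp add: power2_eq_square field_simps)

lemma bhat1:
  assumes p: "m1 > 0" "m2 > 0" "m3 > 0" "m1 + m2 + m3 = 1"
  shows "bhat m1 m2 m3 1 = vector [(m2 - m1*m3)/(m2 + m1*m3), 2 * sqrt(m1*m2*m3)/(m2+m1*m3), 0]"
  unfolding bhat_def
proof (rule the_equality)
  define b where "b = sqrt (m1/(1-m1))"
  have b2: "b^2 = m1/(1-m1)" unfolding b_def using p by simp
  have h: "1 - m1 > 0" using p by simp
  have "normalized_config m1 m2 m3 (of_real (-(1-m1)/m1 * b)) (of_real b) (of_real b)"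
  proof -
    have m23: "m2 + m3 = 1 - m1" using p by simp
    have e1: "m1 * (-(1-m1)/m1 * b) + m2 * b + m3 * b = 0"
    proof -
      have A: "m1 * (-(1-m1)/m1 * b) = -(1-m1) * b" using p(1) by simp
      have m3e: "m3 = 1 - m1 - m2" using p by simp
      have "-(1-m1) * b + m2 * b + m3 * b = 0" unfolding m3e by (simp add: algebra_simps)
      thus ?thesis unfolding A .
    qed
    have "m1 * (-(1-m1)/m1 * b)^2 + m2 * b^2 + m3 * b^2 = m1 * ((1-m1)/m1)^2 * b^2 + (m2 + m3) * b^2"
      by (simp add: algebra_simps power2_eq_square)
    also have "\<dots> = 1" unfolding m23 b2 mult.assoc[symmetric] using p(1) h alg3[of m1 "1-m1"] by simp
    finally show ?thesis unfolding nc_real using e1 by simp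
  qed
  thus "\<exists>a1 a2 a3. normalized_config m1 m2 m3 a1 a2 a3 \<and> binary_collision 1 a1 a2 a3 \<and>
      vector [(m2 - m1*m3)/(m2 + m1*m3), 2 * sqrt(m1*m2*m3)/(m2+m1*m3), 0] = shape_point m1 m2 m3 a1 a2 a3"
    using case1[OF p] unfolding binary_collision_def by fastforce
next
  fix q assume "\<exists>a1 a2 a3. normalized_config m1 m2 m3 a1 a2 a3 \<and> binary_collision 1 a1 a2 a3 \<and> q = shape_point m1 m2 m3 a1 a2 a3"
  then show "q = vector [(m2 - m1*m3)/(m2 + m1*m3), 2 * sqrt(m1*m2*m3)/(m2+m1*m3), 0]"
    using case1[OF p] unfolding binary_collision_def by auto
qed

lemma bhat2:
  assumes p: "m1 > 0" "m2 > 0" "m3 > 0" "m1 + m2 + m3 = 1"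
  shows "bhat m1 m2 m3 2 = vector [(m1 - m2*m3)/(m1 + m2*m3), - 2 * sqrt(m1*m2*m3)/(m1+m2*m3), 0]"
  unfolding bhat_def
proof (rule the_equality)
  define b where "b = sqrt (m2/(1-m2))"
  have b2: "b^2 = m2/(1-m2)" unfolding b_def using p by simp
  have h: "1 - m2 > 0" using p by simp
  have "normalized_config m1 m2 m3 (of_real b) (of_real (-(1-m2)/m2 * b)) (of_real b)"
  proof -
    have m23: "m1 + m3 = 1 - m2" using p by simp
    have e1: "m1 * b + m2 * (-(1-m2)/m2 * b) + m3 * b = 0"
    proof -
      have A: "m2 * (-(1-m2)/m2 * b) = -(1-m2) * b" using p(2) by simp
      have m3e: "m3 = 1 - m1 - m2" using p by simp
      have "m1 * b + -(1-m2) * b + m3 * b = 0" unfolding m3e by (simp add: algebra_simps)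
      thus ?thesis unfolding A .
    qed
    have "m1 * b^2 + m2 * (-(1-m2)/m2 * b)^2 + m3 * b^2 = m2 * ((1-m2)/m2)^2 * b^2 + (m1 + m3) * b^2"
      by (simp add: algebra_simps power2_eq_square)
    also have "\<dots> = 1" unfolding m23 b2 mult.assoc[symmetric] using p(2) h alg3[of m2 "1-m2"] by simp
    finally show ?thesis unfolding nc_real using e1 by simp
  qed
  thus "\<exists>a1 a2 a3. normalized_config m1 m2 m3 a1 a2 a3 \<and> binary_collision 2 a1 a2 a3 \<and>
      vector [(m1 - m2*m3)/(m1 + m2*m3), - 2 * sqrt(m1*m2*m3)/(m1+m2*m3), 0] = shape_point m1 m2 m3 a1 a2 a3"
    using case2[OF p] unfolding binary_collision_def by fastforce
next
  fix q assume "\<exists>a1 a2 a3. normalized_config m1 m2 m3 a1 a2 a3 \<and> binary_collision 2 a1 a2 a3 \<and> q = shape_point m1 m2 m3 a1 a2 a3"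
  then show "q = vector [(m1 - m2*m3)/(m1 + m2*m3), - 2 * sqrt(m1*m2*m3)/(m1+m2*m3), 0]"
    using case2[OF p] unfolding binary_collision_def by auto
qed

lemma bhat3:
  assumes p: "m1 > 0" "m2 > 0" "m3 > 0" "m1 + m2 + m3 = 1"
  shows "bhat m1 m2 m3 3 = vector [-1, 0, 0]"
  unfolding bhat_def
proof (rule the_equality)
  define b where "b = sqrt (m3/(1-m3))"
  have b2: "b^2 = m3/(1-m3)" unfolding b_def using p by simp
  have h: "1 - m3 > 0" using p by simp
  have "normalized_config m1 m2 m3 (of_real b) (of_real b) (of_real (-(1-m3)/m3 * b))"
  proof -
    have m23: "m1 + m2 = 1 - m3" using p by simp
    have e1: "m1 * b + m2 * b + m3 * (-(1-m3)/m3 * b) = 0"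
    proof -
      have A: "m3 * (-(1-m3)/m3 * b) = -(1-m3) * b" using p(3) by simp
      have m3e: "m3 = 1 - m1 - m2" using p by simp
      have "m1 * b + m2 * b + -(1-m3) * b = 0" unfolding m3e by (simp add: algebra_simps)
      thus ?thesis unfolding A .
    qed
    have "m1 * b^2 + m2 * b^2 + m3 * (-(1-m3)/m3 * b)^2 = m3 * ((1-m3)/m3)^2 * b^2 + (m1 + m2) * b^2"
      by (simp add: algebra_simps power2_eq_square)
    also have "\<dots> = 1" unfolding m23 b2 mult.assoc[symmetric] using p(3) h alg3[of m3 "1-m3"] by simp
    finally show ?thesis unfolding nc_real using e1 by simp
  qed
  thus "\<exists>a1 a2 a3. normalized_config m1 m2 m3 a1 a2 a3 \<and> binary_collision 3 a1 a2 a3 \<and>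
      vector [-1, 0, 0] = shape_point m1 m2 m3 a1 a2 a3"
    using case3[OF p] unfolding binary_collision_def by fastforce
next
  fix q assume "\<exists>a1 a2 a3. normalized_config m1 m2 m3 a1 a2 a3 \<and> binary_collision 3 a1 a2 a3 \<and> q = shape_point m1 m2 m3 a1 a2 a3"
  then show "q = vector [-1, 0, 0]"
    using case3[OF p] unfolding binary_collision_def by auto
qed

lemma final_alg:
  fixes m1 m2 m3 p1 p2 p3 :: real
  assumes p: "m1 > 0" "m2 > 0" "m3 > 0" "m1 + m2 + m3 = 1"
  shows "(p1 > 0 \<and> p2 > 0 \<and> p3 > 0 \<and> p1 + p2 + p3 = 1 \<and>
     p1 * ((m2 - m1*m3)/(m2 + m1*m3)) + p2 * ((m1 - m2*m3)/(m1 + m2*m3)) + p3 * (-1) = 0 \<and>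
     p1 * (2 * sqrt(m1*m2*m3)/(m2+m1*m3)) + p2 * (- 2 * sqrt(m1*m2*m3)/(m1+m2*m3)) + p3 * 0 = 0 \<and>
     p1 * 0 + p2 * 0 + p3 * 0 = 0)
   \<longleftrightarrow> (p1 = (1 - m1) / 2 \<and> p2 = (1 - m2) / 2 \<and> p3 = (1 - m3) / 2)"
proof -
  define S where "S = sqrt (m1*m2*m3)"
  define A where "A = m1 + m2"
  have S: "S > 0" unfolding S_def using p by simp
  have m3: "m3 = 1 - A" unfolding A_def using p by simp
  have A: "A > 0" "A < 1" unfolding A_def using p by auto
  have D1: "m2 + m1*m3 = (1-m1)*A" unfolding m3 A_def by (simp add: algebra_simps)
  have D2: "m1 + m2*m3 = (1-m2)*A" unfolding m3 A_def by (simp add: algebra_simps)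
  have h1: "1 - m1 > 0" "1 - m2 > 0" using p by auto
  have N1: "m2 - m1*m3 = (1-m1)*A - 2*m1*m3" unfolding m3 A_def by (simp add: algebra_simps)
  show ?thesis unfolding S_def[symmetric] D1 D2
  proof
    assume H: "p1 > 0 \<and> p2 > 0 \<and> p3 > 0 \<and> p1 + p2 + p3 = 1 \<and>
     p1 * ((m2 - m1*m3)/((1-m1)*A)) + p2 * ((m1 - m2*m3)/((1-m2)*A)) + p3 * (-1) = 0 \<and>
     p1 * (2 * S/((1-m1)*A)) + p2 * (- 2 * S/((1-m2)*A)) + p3 * 0 = 0 \<and>
     p1 * 0 + p2 * 0 + p3 * 0 = 0"
    define l where "l = p1 / ((1-m1)*A)"
    have e1: "p1 = l * ((1-m1)*A)" unfolding l_def using h1 A by simp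
    have "p1 / ((1-m1)*A) = p2 / ((1-m2)*A)"
    proof -
      have "2 * S * (p1 / ((1-m1)*A) - p2 / ((1-m2)*A)) = 0" using H by (simp add: algebra_simps)
      thus ?thesis using S by simp
    qed
    hence e2: "p2 = l * ((1-m2)*A)" unfolding l_def using h1 A by (simp add: field_simps)
    have r: "p * (N / D) = p / D * N" for p N D :: real by simp
    have "p3 = l * (m2 - m1*m3) + p2 / ((1-m2)*A) * (m1 - m2*m3)"
      using H unfolding l_def r by linarith
    also have "p2 / ((1-m2)*A) = l" unfolding l_def using \<open>p1 / ((1-m1)*A) = p2 / ((1-m2)*A)\<close> by simp
    finally have "p3 = l * (m2 - m1*m3) + l * (m1 - m2*m3)" .
    also have "\<dots> = l * A^2" unfolding m3 A_def by (simp add: algebra_simps power2_eq_square)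
    finally have e3: "p3 = l * A^2" .
    have "l * ((1-m1)*A + (1-m2)*A + A^2) = 1" using H unfolding e1 e2 e3 by (simp add: algebra_simps)
    moreover have "(1-m1)*A + (1-m2)*A + A^2 = 2 * A" unfolding A_def by (simp add: algebra_simps power2_eq_square)
    ultimately have l: "l = 1 / (2*A)" using A by (simp add: field_simps)
    show "p1 = (1 - m1) / 2 \<and> p2 = (1 - m2) / 2 \<and> p3 = (1 - m3) / 2"
      unfolding e1 e2 e3 l m3 using A by (simp add: field_simps power2_eq_square)
  next
    assume H: "p1 = (1 - m1) / 2 \<and> p2 = (1 - m2) / 2 \<and> p3 = (1 - m3) / 2"
    have x: "(1 - m1) / 2 * ((m2 - m1*m3)/((1-m1)*A)) + (1 - m2) / 2 * ((m1 - m2*m3)/((1-m2)*A)) = (1 - m3)/2"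
    proof -
      have r: "c / 2 * (N / (c * A)) = N / (2 * A)" if "c \<noteq> 0" for c N using that by simp
      have "(m2 - m1*m3) + (m1 - m2*m3) = A * A" unfolding m3 A_def by (simp add: algebra_simps)
      hence "(m2 - m1*m3)/(2*A) + (m1 - m2*m3)/(2*A) = A/2" using A by (simp add: add_divide_distrib[symmetric])
      thus ?thesis using h1 unfolding r[of "1-m1"] r[of "1-m2"] m3 by simp
    qed
    have y: "(1 - m1) / 2 * (2 * S/((1-m1)*A)) + (1 - m2) / 2 * (- 2 * S/((1-m2)*A)) = 0"
      using h1 A by (simp add: field_simps)
    show "p1 > 0 \<and> p2 > 0 \<and> p3 > 0 \<and> p1 + p2 + p3 = 1 \<and>
     p1 * ((m2 - m1*m3)/((1-m1)*A)) + p2 * ((m1 - m2*m3)/((1-m2)*A)) + p3 * (-1) = 0 \<and>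
     p1 * (2 * S/((1-m1)*A)) + p2 * (- 2 * S/((1-m2)*A)) + p3 * 0 = 0 \<and>
     p1 * 0 + p2 * 0 + p3 * 0 = 0"
    proof -
      have q: "p1 = (1 - m1) / 2" "p2 = (1 - m2) / 2" "p3 = (1 - m3) / 2" using H by auto
      have "1 - m3 > 0" using p by simp
      have sm: "(1 - m1) / 2 + (1 - m2) / 2 + (1 - m3) / 2 = 1" using p(4) by (simp add: field_simps)
      show ?thesis unfolding q using x y h1 \<open>1 - m3 > 0\<close> sm by auto
    qed
  qed
qed

theorem mainTheorem17:
  fixes m1 m2 m3 :: real
  assumes "m1 > 0" and "m2 > 0" and "m3 > 0" and "m1 + m2 + m3 = 1"
  shows "(\<exists>!mm :: real \<times> real \<times> real. (case mm of (p1, p2, p3) \<Rightarrow>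
            p1 > 0 \<and> p2 > 0 \<and> p3 > 0 \<and> p1 + p2 + p3 = 1 \<and>
            p1 *\<^sub>R bhat m1 m2 m3 1 + p2 *\<^sub>R bhat m1 m2 m3 2 + p3 *\<^sub>R bhat m1 m2 m3 3 = 0)) \<and>
         (\<forall>p1 p2 p3. (p1 > 0 \<and> p2 > 0 \<and> p3 > 0 \<and> p1 + p2 + p3 = 1 \<and>
            p1 *\<^sub>R bhat m1 m2 m3 1 + p2 *\<^sub>R bhat m1 m2 m3 2 + p3 *\<^sub>R bhat m1 m2 m3 3 = 0)
          \<longleftrightarrow> (p1 = (1 - m1) / 2 \<and> p2 = (1 - m2) / 2 \<and> p3 = (1 - m3) / 2))"
proof -
  have key: "\<And>p1 p2 p3. (p1 > 0 \<and> p2 > 0 \<and> p3 > 0 \<and> p1 + p2 + p3 = 1 \<and>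
            p1 *\<^sub>R bhat m1 m2 m3 1 + p2 *\<^sub>R bhat m1 m2 m3 2 + p3 *\<^sub>R bhat m1 m2 m3 3 = 0)
          \<longleftrightarrow> (p1 = (1 - m1) / 2 \<and> p2 = (1 - m2) / 2 \<and> p3 = (1 - m3) / 2)"
    unfolding bhat1[OF assms] bhat2[OF assms] bhat3[OF assms] vec3 using final_alg[OF assms] by simp
  show ?thesis
  proof
    show "\<exists>!mm :: real \<times> real \<times> real. (case mm of (p1, p2, p3) \<Rightarrow>
            p1 > 0 \<and> p2 > 0 \<and> p3 > 0 \<and> p1 + p2 + p3 = 1 \<and>
            p1 *\<^sub>R bhat m1 m2 m3 1 + p2 *\<^sub>R bhat m1 m2 m3 2 + p3 *\<^sub>R bhat m1 m2 m3 3 = 0)"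
    proof (rule ex1I[of _ "((1 - m1) / 2, (1 - m2) / 2, (1 - m3) / 2)"])
      show "case ((1 - m1) / 2, (1 - m2) / 2, (1 - m3) / 2) of (p1, p2, p3) \<Rightarrow>
            p1 > 0 \<and> p2 > 0 \<and> p3 > 0 \<and> p1 + p2 + p3 = 1 \<and>
            p1 *\<^sub>R bhat m1 m2 m3 1 + p2 *\<^sub>R bhat m1 m2 m3 2 + p3 *\<^sub>R bhat m1 m2 m3 3 = 0"
        using key by simp
    next
      fix mm :: "real \<times> real \<times> real"
      assume "case mm of (p1, p2, p3) \<Rightarrow>
            p1 > 0 \<and> p2 > 0 \<and> p3 > 0 \<and> p1 + p2 + p3 = 1 \<and>
            p1 *\<^sub>R bhat m1 m2 m3 1 + p2 *\<^sub>R bhat m1 m2 m3 2 + p3 *\<^sub>R bhat m1 m2 m3 3 = 0"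
      then show "mm = ((1 - m1) / 2, (1 - m2) / 2, (1 - m3) / 2)"
        using key by (cases mm) auto
    qed
  next
    show "\<forall>p1 p2 p3. (p1 > 0 \<and> p2 > 0 \<and> p3 > 0 \<and> p1 + p2 + p3 = 1 \<and>
            p1 *\<^sub>R bhat m1 m2 m3 1 + p2 *\<^sub>R bhat m1 m2 m3 2 + p3 *\<^sub>R bhat m1 m2 m3 3 = 0)
          \<longleftrightarrow> (p1 = (1 - m1) / 2 \<and> p2 = (1 - m2) / 2 \<and> p3 = (1 - m3) / 2)"
      using key by blast
  qed
qed

end
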